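(* Let $R\cong\prod_{i=1}^kR/\mathfrak m_i^{t_i}$ be a finite commutative principal ideal ring, where $\mathfrak m_i$ are its maximal ideals with indices of stability $t_i$, and let $\mathbb F_{q_i}$ be the residue field of $R/\mathfrak m_i^{t_i}$. Let $n$ be a positive integer with $\gcd(n,q_i)=1$ for all $i$. If some $t_i$ is odd, then no cyclic code of length $n$ over $R$ is self-dual.
   Context: All rings are finite, commutative, with identity. The index of stability of $\mathfrak m_i$ is the smallest $t\ge1$ with $\mathfrak m_i^t=\mathfrak m_i^{t+1}$; $R/\mathfrak m_i^{t_i}$ is a finite chain ring whose maximal ideal has nilpotency index $t_i$. A code of length $n$ is an $R$-submodule of $R^n$; cyclic means closed under cyclic shift; self-dual means $C=C^\perp$ for $[u,v]=\sum u_jv_j$. *)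

theory Defs
  imports "HOL-Algebra.QuotRing" "HOL-Algebra.Ideal_Product"
begin

primrec ideal_pow :: "('a, 'b) ring_scheme \<Rightarrow> 'a set \<Rightarrow> nat \<Rightarrow> 'a set" where
  "ideal_pow R I 0 = carrier R"
| "ideal_pow R I (Suc t) = ideal_prod R I (ideal_pow R I t)"

definition stability_index :: "('a, 'b) ring_scheme \<Rightarrow> 'a set \<Rightarrow> nat" where
  "stability_index R I = (LEAST t. 1 \<le> t \<and> ideal_pow R I t = ideal_pow R I (Suc t))"

definition words :: "('a, 'b) ring_scheme \<Rightarrow> nat \<Rightarrow> (nat \<Rightarrow> 'a) set" where
  "words R n = {v. (\<forall>i<n. v i \<in> carrier R) \<and> (\<forall>i\<ge>n. v i = \<zero>\<^bsub>R\<^esub>)}"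

definition word_zero :: "('a, 'b) ring_scheme \<Rightarrow> nat \<Rightarrow> 'a" where
  "word_zero R = (\<lambda>i. \<zero>\<^bsub>R\<^esub>)"

definition word_add :: "('a, 'b) ring_scheme \<Rightarrow> nat \<Rightarrow> (nat \<Rightarrow> 'a) \<Rightarrow> (nat \<Rightarrow> 'a) \<Rightarrow> nat \<Rightarrow> 'a" where
  "word_add R n u v = (\<lambda>i. if i < n then u i \<oplus>\<^bsub>R\<^esub> v i else \<zero>\<^bsub>R\<^esub>)"

definition word_smult :: "('a, 'b) ring_scheme \<Rightarrow> nat \<Rightarrow> 'a \<Rightarrow> (nat \<Rightarrow> 'a) \<Rightarrow> nat \<Rightarrow> 'a" where
  "word_smult R n r v = (\<lambda>i. if i < n then r \<otimes>\<^bsub>R\<^esub> v i else \<zero>\<^bsub>R\<^esub>)"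

definition linear_code :: "('a, 'b) ring_scheme \<Rightarrow> nat \<Rightarrow> (nat \<Rightarrow> 'a) set \<Rightarrow> bool" where
  "linear_code R n C \<longleftrightarrow> C \<subseteq> words R n \<and> word_zero R \<in> C
     \<and> (\<forall>u\<in>C. \<forall>v\<in>C. word_add R n u v \<in> C)
     \<and> (\<forall>r\<in>carrier R. \<forall>v\<in>C. word_smult R n r v \<in> C)"

definition cyc_shift :: "('a, 'b) ring_scheme \<Rightarrow> nat \<Rightarrow> (nat \<Rightarrow> 'a) \<Rightarrow> nat \<Rightarrow> 'a" where
  "cyc_shift R n v = (\<lambda>i. if i < n then v ((i + n - 1) mod n) else \<zero>\<^bsub>R\<^esub>)"

definition cyclic_code :: "('a, 'b) ring_scheme \<Rightarrow> nat \<Rightarrow> (nat \<Rightarrow> 'a) set \<Rightarrow> bool" where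
  "cyclic_code R n C \<longleftrightarrow> linear_code R n C \<and> (\<forall>v\<in>C. cyc_shift R n v \<in> C)"

definition inner_prod :: "('a, 'b) ring_scheme \<Rightarrow> nat \<Rightarrow> (nat \<Rightarrow> 'a) \<Rightarrow> (nat \<Rightarrow> 'a) \<Rightarrow> 'a" where
  "inner_prod R n u v = (\<Oplus>\<^bsub>R\<^esub> j\<in>{..<n}. u j \<otimes>\<^bsub>R\<^esub> v j)"

definition dual_code :: "('a, 'b) ring_scheme \<Rightarrow> nat \<Rightarrow> (nat \<Rightarrow> 'a) set \<Rightarrow> (nat \<Rightarrow> 'a) set" where
  "dual_code R n C = {u \<in> words R n. \<forall>v\<in>C. inner_prod R n u v = \<zero>\<^bsub>R\<^esub>}"

definition self_dual :: "('a, 'b) ring_scheme \<Rightarrow> nat \<Rightarrow> (nat \<Rightarrow> 'a) set \<Rightarrow> bool" where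
  "self_dual R n C \<longleftrightarrow> C = dual_code R n C"

end

theory Submission
  imports Defs "HOL-Algebra.Multiplicative_Group"
begin


context cring
begin

lemma PIdl_mem: "x \<in> PIdl a \<longleftrightarrow> (\<exists>r\<in>carrier R. x = r \<otimes> a)"
  unfolding cgenideal_def by blast

lemma ideal_prod_PIdl:
  assumes "a \<in> carrier R" "b \<in> carrier R"
  shows "ideal_prod R (PIdl a) (PIdl b) = PIdl (a \<otimes> b)"
proof
  show "ideal_prod R (PIdl a) (PIdl b) \<subseteq> PIdl (a \<otimes> b)"
    using ideal_prod_eq_genideal[OF cgenideal_ideal[OF assms(1)] cgenideal_ideal[OF assms(2)]]
      cgenideal_prod[OF assms] genideal_minimal[OF cgenideal_ideal] assms
    by (metis m_closed order_refl)
  show "PIdl (a \<otimes> b) \<subseteq> ideal_prod R (PIdl a) (PIdl b)"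
  proof
    fix x assume "x \<in> PIdl (a \<otimes> b)"
    then obtain r where r: "r \<in> carrier R" "x = r \<otimes> (a \<otimes> b)" by (auto simp: PIdl_mem)
    have "r \<otimes> a \<in> PIdl a" using r assms by (auto simp: PIdl_mem)
    moreover have "b \<in> PIdl b" using assms cgenideal_self by blast
    ultimately have "(r \<otimes> a) \<otimes> b \<in> ideal_prod R (PIdl a) (PIdl b)" by (rule ideal_prod.prod)
    thus "x \<in> ideal_prod R (PIdl a) (PIdl b)" using r assms by (simp add: m_assoc)
  qed
qed

lemma ideal_pow_PIdl:
  assumes "p \<in> carrier R"
  shows "ideal_pow R (PIdl p) k = PIdl (p [^] k)"
proof (induction k)
  case 0
  have "carrier R = PIdl \<one>"
    by (auto simp: PIdl_mem)
  then show ?case by simp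
next
  case (Suc k)
  then show ?case using assms ideal_prod_PIdl[of p "p [^] k"]
    by (simp add: nat_pow_Suc2 m_comm)
qed

lemma geom:
  assumes x: "x \<in> carrier R"
  shows "\<exists>w\<in>carrier R. w \<otimes> (\<one> \<ominus> x) = \<one> \<ominus> x [^] (k::nat)"
proof (induction k)
  case 0
  show ?case using x by (intro bexI[of _ \<zero>]) (auto simp: r_neg minus_eq)
next
  case (Suc k)
  then obtain w where w: "w \<in> carrier R" "w \<otimes> (\<one> \<ominus> x) = \<one> \<ominus> x [^] k" by blast
  have "(w \<oplus> x [^] k) \<otimes> (\<one> \<ominus> x) = \<one> \<ominus> (x [^] k) \<oplus> x [^] k \<otimes> (\<one> \<ominus> x)"
    using w x by (simp add: l_distr)
  also have "\<dots> = \<one> \<ominus> x [^] Suc k"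
  proof -
    have xk: "x [^] k \<in> carrier R" using x by simp
    have "x [^] k \<otimes> (\<one> \<ominus> x) = x [^] k \<oplus> \<ominus> (x [^] Suc k)"
      using x xk by (simp add: minus_eq r_distr r_minus nat_pow_Suc)
    hence "\<one> \<ominus> (x [^] k) \<oplus> x [^] k \<otimes> (\<one> \<ominus> x) = (\<one> \<oplus> \<ominus> (x [^] k)) \<oplus> (x [^] k \<oplus> \<ominus> (x [^] Suc k))"
      by (simp add: minus_eq)
    also have "\<dots> = \<one> \<oplus> ((\<ominus> (x [^] k) \<oplus> x [^] k) \<oplus> \<ominus> (x [^] Suc k))"
      using xk x by (simp add: a_assoc)
    also have "\<dots> = \<one> \<ominus> x [^] Suc k" using xk x by (simp add: l_neg minus_eq)
    finally show ?thesis .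
  qed
  finally show ?case using w x by (intro bexI[of _ "w \<oplus> x [^] k"]) auto
qed

end

locale stab = cring +
  fixes p
  assumes p: "p \<in> carrier R"
    and maxi: "maximalideal (PIdl p) R"
    and fin: "finite (carrier R)"
begin

definition P where "P k = PIdl (p [^] (k::nat))"

lemma P_eq: "ideal_pow R (PIdl p) k = P k"
  using ideal_pow_PIdl[OF p] unfolding P_def .

lemma P_mem: "x \<in> P k \<longleftrightarrow> (\<exists>r\<in>carrier R. x = r \<otimes> p [^] k)"
  unfolding P_def PIdl_mem ..

lemma P_mono: "i \<le> j \<Longrightarrow> P j \<subseteq> P i"
proof
  fix x assume "i \<le> j" "x \<in> P j"
  then obtain r where r: "r \<in> carrier R" "x = r \<otimes> p [^] j" by (auto simp: P_mem)
  have "p [^] j = p [^] (j - i) \<otimes> p [^] i"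
    using \<open>i \<le> j\<close> p by (simp add: nat_pow_mult)
  hence "x = (r \<otimes> p [^] (j - i)) \<otimes> p [^] i" using r p by (simp add: m_assoc)
  thus "x \<in> P i" using r p by (auto simp: P_mem)
qed

lemma P_sub: "P k \<subseteq> carrier R"
  using p by (auto simp: P_mem)

lemma P_ideal: "ideal (P k) R"
  using p by (simp add: cgenideal_ideal P_def)

lemma stab_exists: "\<exists>t. 1 \<le> t \<and> P t = P (Suc t)"
proof (rule ccontr)
  assume "\<not> ?thesis"
  hence ne: "\<And>t. 1 \<le> t \<Longrightarrow> P (Suc t) \<subset> P t" using P_mono
    by (metis le_SucI order_refl psubsetI)
  have fP: "finite (P k)" for k using P_sub fin finite_subset by blast
  have "card (P (Suc k)) + k \<le> card (carrier R)" for k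
  proof (induction k)
    case 0 then show ?case using card_mono[OF fin P_sub] by simp
  next
    case (Suc k)
    have "card (P (Suc (Suc k))) < card (P (Suc k))"
      using psubset_card_mono[OF fP ne[of "Suc k"]] by simp
    then show ?case using Suc by simp
  qed
  from this[of "Suc (card (carrier R))"] show False by simp
qed

definition t where "t = stability_index R (PIdl p)"

lemma t_props: "1 \<le> t" "P t = P (Suc t)" "\<And>s. 1 \<le> s \<Longrightarrow> s < t \<Longrightarrow> P s \<noteq> P (Suc s)"
proof -
  have ex: "\<exists>t. 1 \<le> t \<and> ideal_pow R (PIdl p) t = ideal_pow R (PIdl p) (Suc t)"
    using stab_exists unfolding P_eq .
  show "1 \<le> t" "P t = P (Suc t)"
    using LeastI_ex[OF ex] unfolding t_def stability_index_def P_eq by auto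
  show "\<And>s. 1 \<le> s \<Longrightarrow> s < t \<Longrightarrow> P s \<noteq> P (Suc s)"
    using not_less_Least unfolding t_def stability_index_def P_eq by blast
qed

lemma P_stable: "P (t + j) = P t"
proof (induction j)
  case 0 then show ?case by simp
next
  case (Suc j)
  have "P (t + Suc j) = ideal_pow R (PIdl p) (Suc (t + j))" by (simp only: P_eq add_Suc_right)
  also have "\<dots> = ideal_prod R (PIdl p) (ideal_pow R (PIdl p) (t + j))"
    by (simp only: ideal_pow.simps)
  also have "\<dots> = ideal_prod R (PIdl p) (ideal_pow R (PIdl p) t)" using Suc by (simp only: P_eq)
  also have "\<dots> = ideal_pow R (PIdl p) (Suc t)" by (simp only: ideal_pow.simps)
  also have "\<dots> = P t" using t_props(2) by (simp only: P_eq)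
  finally show ?case .
qed

lemma key: "k < t \<Longrightarrow> p [^] k \<notin> P t"
proof
  assume k: "k < t" and in_t: "p [^] k \<in> P t"
  have "P k \<subseteq> P t" using cgenideal_minimal[OF P_ideal in_t] unfolding P_def .
  moreover have "P t \<subseteq> P (Suc k)" using P_mono k by simp
  moreover have "P (Suc k) \<subseteq> P k" using P_mono by simp
  ultimately have eq: "P k = P (Suc k)" by blast
  show False
  proof (cases "k = 0")
    case True
    have "P 0 = carrier R" by (auto simp: P_mem)
    moreover have "P 1 = PIdl p" using p by (simp add: P_def)
    ultimately show False using eq True maximalideal.I_notcarr[OF maxi] by simp
  next
    case False
    then show False using t_props(3)[of k] k eq by simp
  qed
qed


lemma unit_mod:
  assumes s: "s \<in> carrier R" and sn: "s \<notin> PIdl p"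
  shows "\<exists>u\<in>carrier R. \<exists>q\<in>P t. u \<otimes> s = \<one> \<oplus> q"
proof -
  let ?K = "set_add R (PIdl p) (PIdl s)"
  have Kid: "ideal ?K R" using add_ideals cgenideal_ideal p s by blast
  have sub: "PIdl p \<subseteq> ?K"
  proof
    fix y assume "y \<in> PIdl p"
    moreover have "\<zero> \<in> PIdl s" using s by (auto simp: PIdl_mem) (metis l_null zero_closed)
    moreover have "y = y \<oplus> \<zero>" using \<open>y \<in> PIdl p\<close> p by (auto simp: PIdl_mem)
    ultimately show "y \<in> ?K" unfolding set_add_def' by blast
  qed
  have sK: "s \<in> ?K"
  proof -
    have "\<zero> \<in> PIdl p" using p by (auto simp: PIdl_mem) (metis l_null zero_closed)
    moreover have "s \<in> PIdl s" using s cgenideal_self by blast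
    moreover have "s = \<zero> \<oplus> s" using s by simp
    ultimately show ?thesis unfolding set_add_def' by blast
  qed
  have "?K \<subseteq> carrier R" using ideal.Icarr[OF Kid] by blast
  hence "?K = carrier R" using maximalideal.I_maximal[OF maxi Kid sub] sK sn by blast
  hence "\<one> \<in> ?K" by simp
  then obtain y z where yz: "y \<in> PIdl p" "z \<in> PIdl s" "\<one> = y \<oplus> z" unfolding set_add_def' by blast
  then obtain c a where ca: "c \<in> carrier R" "y = c \<otimes> p" "a \<in> carrier R" "z = a \<otimes> s"
    by (auto simp: PIdl_mem)
  have yc: "y \<in> carrier R" using ca p by simp
  have zc: "z \<in> carrier R" using ca s by simp
  have "z = \<ominus> y \<oplus> \<one>" using add.inv_solve_left[of z y \<one>] yz(3) yc zc by simp
  hence zeq: "z = \<one> \<ominus> y" using yc by (simp add: minus_eq a_comm)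
  obtain w where w: "w \<in> carrier R" "w \<otimes> (\<one> \<ominus> y) = \<one> \<ominus> y [^] t"
    using geom[OF yc] by blast
  have "(w \<otimes> a) \<otimes> s = w \<otimes> z" using w(1) ca(3) s by (simp add: m_assoc ca(4))
  also have "\<dots> = \<one> \<ominus> y [^] t" using zeq w(2) by simp
  finally have "(w \<otimes> a) \<otimes> s = \<one> \<oplus> \<ominus> (y [^] t)" by (simp only: minus_eq)
  moreover have "\<ominus> (y [^] t) \<in> P t"
  proof -
    have "y [^] t = c [^] t \<otimes> p [^] t" using ca p by (simp add: nat_pow_distrib)
    hence "\<ominus> (y [^] t) = (\<ominus> (c [^] t)) \<otimes> p [^] t" using ca p by (simp add: l_minus)
    thus ?thesis using ca by (auto simp: P_mem)
  qed
  ultimately show ?thesis using w ca by blast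
qed

lemma even_t:
  assumes g: "g \<in> carrier R" and gg: "g \<otimes> g = \<zero>"
    and ann: "\<forall>c\<in>carrier R. c \<otimes> g = \<zero> \<longrightarrow> (\<exists>r\<in>carrier R. c = r \<otimes> g)"
  shows "even t"
proof -
  have pc: "\<And>k. p [^] (k::nat) \<in> carrier R" using p by simp
  have "p [^] t \<in> P (t + t)" using P_stable[of t] cgenideal_self[OF pc] by (simp add: P_def)
  then obtain r where r: "r \<in> carrier R" "p [^] t = r \<otimes> p [^] (t + t)" by (auto simp: P_mem)
  define f where "f = r \<otimes> p [^] t"
  have fc: "f \<in> carrier R" using r(1) p by (simp add: f_def)
  have ptt: "p [^] (t + t) = p [^] t \<otimes> p [^] t" using p by (simp add: nat_pow_mult)
  have pf: "p [^] t \<otimes> f = p [^] t"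
  proof -
    have "p [^] t \<otimes> f = r \<otimes> (p [^] t \<otimes> p [^] t)" using r(1) pc by (simp add: f_def m_lcomm)
    also have "\<dots> = r \<otimes> p [^] (t + t)" by (simp only: ptt)
    also have "\<dots> = p [^] t" by (rule r(2)[symmetric])
    finally show ?thesis .
  qed
  have ff: "f \<otimes> f = f"
  proof -
    have "f \<otimes> f = r \<otimes> (p [^] t \<otimes> f)" using r(1) pc fc by (simp add: f_def m_assoc)
    also have "\<dots> = f" using pf by (simp add: f_def)
    finally show ?thesis .
  qed
  define e where "e = \<one> \<ominus> f"
  have ec: "e \<in> carrier R" using fc by (simp add: e_def)
  have ef: "e \<oplus> f = \<one>" using fc by (simp add: e_def minus_eq a_assoc l_neg)
  have pe: "p [^] t \<otimes> e = \<zero>" using pf fc pc by (simp add: e_def minus_eq r_distr r_minus r_neg)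
  have fe: "f \<otimes> e = \<zero>" using ff fc by (simp add: e_def minus_eq r_distr r_minus r_neg)
  have ee: "e \<otimes> e = e"
  proof -
    have "e \<otimes> e = (\<one> \<ominus> f) \<otimes> e" by (simp add: e_def)
    also have "\<dots> = e \<ominus> f \<otimes> e" using fc ec by (simp add: minus_eq l_distr l_minus)
    finally show ?thesis using fe ec by (simp add: minus_eq)
  qed
  have killed: "\<And>k::nat. p [^] k \<otimes> e = \<zero> \<Longrightarrow> p [^] k \<in> P t"
  proof -
    fix k assume h: "p [^] (k::nat) \<otimes> e = \<zero>"
    have "p [^] k = p [^] k \<otimes> (e \<oplus> f)" using ef pc by simp
    also have "\<dots> = p [^] k \<otimes> f" using h pc ec fc by (simp add: r_distr)
    also have "\<dots> = (p [^] k \<otimes> r) \<otimes> p [^] t" using pc r(1) by (simp add: f_def m_assoc)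
    finally show "p [^] k \<in> P t" using pc r(1) by (auto simp: P_mem)
  qed
  have "g \<in> P 0" using g by (auto simp: P_mem)
  then obtain v where v: "v \<le> t \<and> g \<in> P v" "\<forall>y. y \<le> t \<and> g \<in> P y \<longrightarrow> y \<le> v"
    using Nat.ex_has_greatest_nat[of "\<lambda>k. k \<le> t \<and> g \<in> P k" 0 t] by auto
  then obtain s where s: "s \<in> carrier R" "g = s \<otimes> p [^] v" by (auto simp: P_mem)
  have step1: "v + v \<le> t"
  proof (rule ccontr)
    assume "\<not> v + v \<le> t"
    hence lt: "(t - v) + (t - v) < t" using v by linarith
    define x where "x = p [^] (t - v) \<otimes> e"
    have xc: "x \<in> carrier R" using pc ec by (simp add: x_def)
    have "x \<otimes> g = s \<otimes> (p [^] (t - v) \<otimes> p [^] v) \<otimes> e"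
      using pc ec s by (simp add: x_def m_ac)
    also have "p [^] (t - v) \<otimes> p [^] v = p [^] t" using v p by (simp add: nat_pow_mult)
    finally have "x \<otimes> g = \<zero>" using s pe pc ec by (simp add: m_assoc)
    then obtain c where c: "c \<in> carrier R" "x = c \<otimes> g" using ann xc by blast
    have "x \<otimes> x = (c \<otimes> c) \<otimes> (g \<otimes> g)" using c g by (simp add: m_ac)
    hence "x \<otimes> x = \<zero>" using gg c by simp
    moreover have "x \<otimes> x = p [^] ((t - v) + (t - v)) \<otimes> (e \<otimes> e)"
    proof -
      have "p [^] ((t - v) + (t - v)) = p [^] (t - v) \<otimes> p [^] (t - v)" using p by (simp add: nat_pow_mult)
      thus ?thesis using pc ec by (simp add: x_def m_ac)
    qed
    ultimately have "p [^] ((t - v) + (t - v)) \<otimes> e = \<zero>" using ee by simp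
    thus False using killed key lt by blast
  qed
  have step2: "t \<le> v + v"
  proof (rule ccontr)
    assume "\<not> t \<le> v + v"
    hence lt: "v + v < t" by simp
    hence vt: "v < t" by simp
    have "s \<notin> PIdl p"
    proof
      assume "s \<in> PIdl p"
      then obtain s' where s': "s' \<in> carrier R" "s = s' \<otimes> p" by (auto simp: PIdl_mem)
      hence "g = s' \<otimes> p [^] Suc v" using s p by (simp add: m_ac nat_pow_Suc2)
      hence "g \<in> P (Suc v)" using s' by (auto simp: P_mem)
      thus False using v(2) vt Suc_leI[OF vt] by (metis Suc_n_not_le_n)
    qed
    then obtain u q where uq: "u \<in> carrier R" "q \<in> P t" "u \<otimes> s = \<one> \<oplus> q"
      using unit_mod s by blast
    have qc: "q \<in> carrier R" using uq P_sub by blast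
    define q2 where "q2 = q \<otimes> (\<one> \<oplus> q) \<oplus> q"
    have a1: "q \<otimes> (\<one> \<oplus> q) \<in> P t" using ideal.I_r_closed[OF P_ideal uq(2)] qc by simp
    have q2P: "q2 \<in> P t"
      using additive_subgroup.a_closed[OF ideal.axioms(1)[OF P_ideal] a1 uq(2)] unfolding q2_def .
    have q2c: "q2 \<in> carrier R" using q2P P_sub by blast
    have "(\<one> \<oplus> q) \<otimes> (\<one> \<oplus> q) = \<one> \<otimes> (\<one> \<oplus> q) \<oplus> q \<otimes> (\<one> \<oplus> q)"
      using qc by (simp only: l_distr one_closed a_closed)
    also have "\<dots> = (\<one> \<oplus> q) \<oplus> q \<otimes> (\<one> \<oplus> q)" using qc by simp
    also have "\<dots> = \<one> \<oplus> q2" using qc by (simp add: q2_def a_ac)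
    finally have sq: "(\<one> \<oplus> q) \<otimes> (\<one> \<oplus> q) = \<one> \<oplus> q2" .
    have pvv: "p [^] (v + v) = p [^] v \<otimes> p [^] v" using p by (simp add: nat_pow_mult)
    have "(u \<otimes> u) \<otimes> (g \<otimes> g) = (p [^] v \<otimes> p [^] v) \<otimes> ((u \<otimes> s) \<otimes> (u \<otimes> s))"
      using uq(1) s pc by (simp add: m_ac)
    hence e1: "(u \<otimes> u) \<otimes> (g \<otimes> g) = p [^] (v + v) \<otimes> ((\<one> \<oplus> q) \<otimes> (\<one> \<oplus> q))"
      by (simp only: pvv uq(3))
    have e2: "(u \<otimes> u) \<otimes> (g \<otimes> g) = \<zero>" using uq(1) by (simp only: gg r_null m_closed)
    have "\<zero> = p [^] (v + v) \<otimes> (\<one> \<oplus> q2)" using e1 e2 sq by simp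
    hence h0: "\<zero> = p [^] (v + v) \<oplus> p [^] (v + v) \<otimes> q2" using pc q2c by (simp add: r_distr)
    have "\<ominus> (p [^] (v + v) \<otimes> q2) = p [^] (v + v)"
      using minus_equality[OF h0[symmetric]] pc q2c by simp
    hence "p [^] (v + v) = \<ominus> (p [^] (v + v) \<otimes> q2)" by simp
    moreover have "\<ominus> (p [^] (v + v) \<otimes> q2) \<in> P t"
      using q2P pc ideal.I_l_closed[OF P_ideal] additive_subgroup.a_inv_closed[OF ideal.axioms(1)[OF P_ideal]]
      by blast
    ultimately show False using key lt by simp
  qed
  from step1 step2 have "t = v + v" by linarith
  thus ?thesis by presburger
qed

end



context cring
begin

lemma finite_max_ideal:
  assumes fin: "finite (carrier R)" and I: "ideal I R" and Ine: "I \<noteq> carrier R"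
  shows "\<exists>M. maximalideal M R \<and> I \<subseteq> M"
proof -
  let ?Q = "\<lambda>J. ideal J R \<and> I \<subseteq> J \<and> J \<noteq> carrier R"
  have "\<forall>y. ?Q y \<longrightarrow> card y < Suc (card (carrier R))"
    using fin by (metis card_mono ideal.Icarr le_imp_less_Suc subsetI)
  then obtain J where J: "?Q J" "\<forall>y. ?Q y \<longrightarrow> card y \<le> card J"
    using ex_has_greatest_nat[of ?Q I card "Suc (card (carrier R))"] I Ine by blast
  have "maximalideal J R"
  proof (rule maximalidealI)
    show "ideal J R" "carrier R \<noteq> J" using J by auto
    fix K assume K: "ideal K R" "J \<subseteq> K" "K \<subseteq> carrier R"
    show "K = J \<or> K = carrier R"
    proof (cases "K = carrier R")
      case False
      hence "card K \<le> card J" using J K by blast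
      moreover have "finite K" using K fin finite_subset by blast
      ultimately have "K = J" using K(2) card_subset_eq by (metis antisym card_mono)
      thus ?thesis by simp
    qed simp
  qed
  thus ?thesis using J by blast
qed

lemma hom_add_pow:
  assumes h: "h \<in> ring_hom R S" and S: "ring S" and a: "a \<in> carrier R"
  shows "h ([(k::nat)] \<cdot> a) = [k] \<cdot>\<^bsub>S\<^esub> (h a)"
proof (induction k)
  case 0
  then show ?case using ring_hom_zero[OF h ring_axioms S] by (simp add: add_pow_def)
next
  case (Suc k)
  have "h ([Suc k] \<cdot> a) = h ([k] \<cdot> a \<oplus> a)" by (simp add: add_pow_def)
  also have "\<dots> = h ([k] \<cdot> a) \<oplus>\<^bsub>S\<^esub> h a"
    using a h by (simp add: ring_hom_add add.nat_pow_closed)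
  also have "\<dots> = [Suc k] \<cdot>\<^bsub>S\<^esub> (h a)" using Suc by (simp add: add_pow_def)
  finally show ?case .
qed

lemma n_cancel:
  fixes n :: nat
  assumes fin: "finite (carrier R)"
    and cop: "\<forall>M. maximalideal M R \<longrightarrow> coprime n (card (carrier (R Quot M)))"
    and y: "y \<in> carrier R" and ny: "[n] \<cdot> y = \<zero>"
  shows "y = \<zero>"
proof -
  let ?x = "[n] \<cdot> \<one>"
  have xc: "?x \<in> carrier R" by simp
  have xy: "?x \<otimes> y = \<zero>" using add_pow_ldistr[of \<one> y n] y ny by simp
  show ?thesis
  proof (cases "PIdl ?x = carrier R")
    case True
    then obtain r where r: "r \<in> carrier R" "\<one> = r \<otimes> ?x"
      using PIdl_mem[of \<one> ?x] by auto
    have "y = (r \<otimes> ?x) \<otimes> y" using r(2)[symmetric] y by simp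
    also have "\<dots> = r \<otimes> (?x \<otimes> y)" using r(1) y xc by (simp add: m_assoc)
    also have "\<dots> = \<zero>" using xy r(1) by simp
    finally show ?thesis .
  next
    case False
    then obtain M where M: "maximalideal M R" "PIdl ?x \<subseteq> M"
      using finite_max_ideal[OF fin cgenideal_ideal[OF xc]] by blast
    have xM: "?x \<in> M" using M cgenideal_self[OF xc] by blast
    interpret Mi: maximalideal M R by fact
    let ?Q = "R Quot M"
    have Qr: "ring ?Q" by (rule Mi.quotient_is_ring)
    interpret Q: ring ?Q by (rule Qr)
    have h: "(+>) M \<in> ring_hom R ?Q" by (rule Mi.rcos_ring_hom)
    have "M +> ?x = M" using a_rcos_zero[OF Mi.is_ideal xM] .
    hence "[n] \<cdot>\<^bsub>?Q\<^esub> (M +> \<one>) = \<zero>\<^bsub>?Q\<^esub>"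
      using hom_add_pow[OF h Qr, of \<one> n] by (simp add: FactRing_def)
    moreover have one: "\<one>\<^bsub>?Q\<^esub> = M +> \<one>" by (simp add: FactRing_def)
    ultimately have "[n] \<cdot>\<^bsub>?Q\<^esub> \<one>\<^bsub>?Q\<^esub> = \<zero>\<^bsub>?Q\<^esub>" by simp
    have grp: "group (add_monoid ?Q)" by (rule Q.a_group)
    have oc: "\<one>\<^bsub>?Q\<^esub> \<in> carrier (add_monoid ?Q)" by simp
    have d1: "group.ord (add_monoid ?Q) \<one>\<^bsub>?Q\<^esub> dvd n"
      using group.pow_eq_id[OF grp oc, of n] \<open>[n] \<cdot>\<^bsub>?Q\<^esub> \<one>\<^bsub>?Q\<^esub> = \<zero>\<^bsub>?Q\<^esub>\<close>
      by (simp add: add_pow_def)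
    have d2: "group.ord (add_monoid ?Q) \<one>\<^bsub>?Q\<^esub> dvd card (carrier ?Q)"
      using group.ord_dvd_group_order[OF grp oc] by (simp add: order_def)
    have "group.ord (add_monoid ?Q) \<one>\<^bsub>?Q\<^esub> = 1"
      using d1 d2 cop M(1) by (meson coprime_common_divisor_nat)
    hence "\<one>\<^bsub>?Q\<^esub> = \<zero>\<^bsub>?Q\<^esub>" using group.ord_eq_1[OF grp oc] by simp
    hence "M +> \<one> = M" using one by (simp add: FactRing_def)
    hence "\<one> \<in> M" using Mi.rcos_const_imp_mem by simp
    thus ?thesis using Mi.I_notcarr Mi.one_imp_carrier by blast
  qed
qed

end



definition constw :: "('a, 'b) ring_scheme \<Rightarrow> nat \<Rightarrow> 'a \<Rightarrow> nat \<Rightarrow> 'a" where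
  "constw R n a = (\<lambda>i. if i < n then a else \<zero>\<^bsub>R\<^esub>)"

fun shsum :: "('a, 'b) ring_scheme \<Rightarrow> nat \<Rightarrow> (nat \<Rightarrow> 'a) \<Rightarrow> nat \<Rightarrow> nat \<Rightarrow> 'a" where
  "shsum R n v 0 = word_zero R"
| "shsum R n v (Suc m) = word_add R n (shsum R n v m) ((cyc_shift R n ^^ m) v)"

lemma mod_shift_step:
  assumes "Suc k \<le> n" "i < n"
  shows "((i + n - 1) mod n + n - k) mod n = (i + n - Suc k) mod n"
proof -
  have n: "n \<ge> 1" using assms by simp
  have "((i + n - 1) mod n + n - k) = (i + n - 1) mod n + (n - k)" using assms by simp
  hence "((i + n - 1) mod n + n - k) mod n = ((i + n - 1) + (n - k)) mod n"
    by (simp add: mod_add_left_eq)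
  also have "(i + n - 1) + (n - k) = (i + n - Suc k) + n" using assms by simp
  finally show ?thesis by simp
qed

context cring
begin

lemma words_carrier: "v \<in> words R n \<Longrightarrow> i < n \<Longrightarrow> v i \<in> carrier R"
  unfolding words_def by blast

lemma constw_words: "a \<in> carrier R \<Longrightarrow> constw R n a \<in> words R n"
  unfolding words_def constw_def by auto

lemma inner_const:
  assumes v: "v \<in> words R n" and c: "c \<in> carrier R"
  shows "inner_prod R n (constw R n c) v = c \<otimes> (\<Oplus>j\<in>{..<n}. v j)"
proof -
  have vc: "(\<lambda>j. v j) \<in> {..<n} \<rightarrow> carrier R" using words_carrier[OF v] by auto
  have "inner_prod R n (constw R n c) v = (\<Oplus>j\<in>{..<n}. c \<otimes> v j)"
    unfolding inner_prod_def
    by (rule finsum_cong') (auto simp: constw_def c words_carrier[OF v])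
  also have "\<dots> = c \<otimes> (\<Oplus>j\<in>{..<n}. v j)"
    using finsum_rdistr[OF _ c vc] by simp
  finally show ?thesis .
qed

lemma inner_const2:
  assumes a: "a \<in> carrier R" and b: "b \<in> carrier R"
  shows "inner_prod R n (constw R n a) (constw R n b) = [n] \<cdot> (a \<otimes> b)"
proof -
  have "inner_prod R n (constw R n a) (constw R n b) = (\<Oplus>j\<in>{..<n}. a \<otimes> b)"
    unfolding inner_prod_def
    by (rule finsum_cong') (auto simp: constw_def a b)
  also have "\<dots> = [n] \<cdot> (a \<otimes> b)"
    using add.finprod_const[of "a \<otimes> b" "{..<n}"] a b by simp
  finally show ?thesis .
qed

lemma smult_const: "word_smult R n r (constw R n a) = constw R n (r \<otimes> a)"
  unfolding word_smult_def constw_def by auto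

lemma add_const: "word_add R n (constw R n a) (constw R n b) = constw R n (a \<oplus> b)"
  unfolding word_add_def constw_def by auto

lemma zero_const: "constw R n \<zero> = word_zero R"
  unfolding word_zero_def constw_def by auto

lemma shift_formula:
  assumes "0 < n" "k \<le> n" "i < n"
  shows "(cyc_shift R n ^^ k) v i = v ((i + n - k) mod n)"
  using assms(2,3)
proof (induction k arbitrary: i)
  case 0
  then show ?case by simp
next
  case (Suc k)
  have "(cyc_shift R n ^^ Suc k) v i = (cyc_shift R n ^^ k) v ((i + n - 1) mod n)"
    using Suc.prems by (simp add: cyc_shift_def)
  also have "\<dots> = v (((i + n - 1) mod n + n - k) mod n)"
    using Suc assms(1) by simp
  also have "\<dots> = v ((i + n - Suc k) mod n)"
    using mod_shift_step Suc.prems by simp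
  finally show ?case .
qed

lemma shift_in:
  assumes "cyclic_code R n C" "v \<in> C"
  shows "(cyc_shift R n ^^ k) v \<in> C"
  using assms by (induction k) (auto simp: cyclic_code_def)

lemma shsum_in:
  assumes "cyclic_code R n C" "v \<in> C"
  shows "shsum R n v m \<in> C"
  using assms shift_in[OF assms]
  by (induction m) (auto simp: cyclic_code_def linear_code_def)

lemma shsum_val:
  assumes cc: "cyclic_code R n C" and v: "v \<in> C" and i: "i < n"
  shows "shsum R n v m i = (\<Oplus>k\<in>{..<m}. (cyc_shift R n ^^ k) v i)"
proof (induction m)
  case 0
  then show ?case by (simp add: word_zero_def)
next
  case (Suc m)
  have Cw: "C \<subseteq> words R n" using cc by (simp add: cyclic_code_def linear_code_def)
  have sc: "\<And>k. (cyc_shift R n ^^ k) v i \<in> carrier R"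
    using shift_in[OF cc v] Cw words_carrier i by blast
  have "shsum R n v (Suc m) i = shsum R n v m i \<oplus> (cyc_shift R n ^^ m) v i"
    using i by (simp add: word_add_def)
  also have "\<dots> = (cyc_shift R n ^^ m) v i \<oplus> (\<Oplus>k\<in>{..<m}. (cyc_shift R n ^^ k) v i)"
    using Suc sc by (simp add: a_comm)
  also have "\<dots> = (\<Oplus>k\<in>{..<Suc m}. (cyc_shift R n ^^ k) v i)"
    using sc by (simp add: lessThan_Suc finsum_insert)
  finally show ?case .
qed

lemma reindex_sum:
  fixes n i :: nat
  assumes n: "0 < n" and i: "i < n" and v: "\<And>j. j < n \<Longrightarrow> v j \<in> carrier R"
  shows "(\<Oplus>k\<in>{..<n}. v ((i + n - k) mod n)) = (\<Oplus>j\<in>{..<n}. v j)"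
proof -
  let ?h = "\<lambda>k. (i + n - k) mod n"
  have inj: "inj_on ?h {..<n}"
  proof
    fix a b assume ab: "a \<in> {..<n}" "b \<in> {..<n}" "?h a = ?h b"
    show "a = b"
    proof (rule ccontr)
      assume "a \<noteq> b"
      show False
      proof (cases rule: linorder_cases[of a b])
        case less
        note 1 = less
        have "n dvd (i + n - a) - (i + n - b)"
          using mod_eq_dvd_iff_nat[where m="i + n - a" and n="i + n - b" and q=n] ab(3) 1 ab by simp
        moreover have "(i + n - a) - (i + n - b) = b - a" using 1 ab by auto
        moreover have "0 < b - a" "b - a < n" using 1 ab by auto
        ultimately show False using nat_dvd_not_less by metis
      next
        case equal then show False using \<open>a \<noteq> b\<close> by simp
      next
        case greater
        note 2 = greater
        have "n dvd (i + n - b) - (i + n - a)"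
          using mod_eq_dvd_iff_nat[where m="i + n - b" and n="i + n - a" and q=n] ab(3) 2 ab by simp
        moreover have "(i + n - b) - (i + n - a) = a - b" using 2 ab by auto
        moreover have "0 < a - b" "a - b < n" using 2 ab by auto
        ultimately show False using nat_dvd_not_less by metis
      qed
    qed
  qed
  have img: "?h ` {..<n} = {..<n}"
  proof (rule endo_inj_surj[OF _ _ inj])
    show "?h ` {..<n} \<subseteq> {..<n}" using n by auto
  qed simp
  have "(\<Oplus>j\<in>{..<n}. v j) = (\<Oplus>j\<in>?h ` {..<n}. v j)" using img by simp
  also have "\<dots> = (\<Oplus>k\<in>{..<n}. v (?h k))"
    by (rule finsum_reindex[OF _ inj]) (use img v in auto)
  finally show ?thesis by simp
qed

lemma sum_const_in:
  assumes n: "0 < n" and cc: "cyclic_code R n C" and v: "v \<in> C"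
  shows "constw R n (\<Oplus>j\<in>{..<n}. v j) \<in> C"
proof -
  have Cw: "C \<subseteq> words R n" using cc by (simp add: cyclic_code_def linear_code_def)
  have vc: "\<And>j. j < n \<Longrightarrow> v j \<in> carrier R" using v Cw words_carrier by blast
  have "shsum R n v n = constw R n (\<Oplus>j\<in>{..<n}. v j)"
  proof
    fix i
    show "shsum R n v n i = constw R n (\<Oplus>j\<in>{..<n}. v j) i"
    proof (cases "i < n")
      case True
      have "shsum R n v n i = (\<Oplus>k\<in>{..<n}. (cyc_shift R n ^^ k) v i)"
        using shsum_val[OF cc v True] .
      also have "\<dots> = (\<Oplus>k\<in>{..<n}. v ((i + n - k) mod n))"
        by (rule finsum_cong') (use shift_formula[OF n _ True] vc n in auto)
      also have "\<dots> = (\<Oplus>j\<in>{..<n}. v j)" using reindex_sum[where v=v, OF n True vc] by simp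
      finally show ?thesis using True by (simp add: constw_def)
    next
      case False
      have "shsum R n v n \<in> words R n" using shsum_in[OF cc v] Cw by blast
      then show ?thesis using False by (simp add: words_def constw_def)
    qed
  qed
  thus ?thesis using shsum_in[OF cc v] by metis
qed

end



context cring
begin

lemma code_g:
  fixes n :: nat
  assumes fin: "finite (carrier R)"
    and princ: "\<forall>I. ideal I R \<longrightarrow> principalideal I R"
    and n: "0 < n"
    and cop: "\<forall>M. maximalideal M R \<longrightarrow> coprime n (card (carrier (R Quot M)))"
    and cc: "cyclic_code R n C" and sd: "self_dual R n C"
  shows "\<exists>g\<in>carrier R. g \<otimes> g = \<zero> \<and> (\<forall>c\<in>carrier R. c \<otimes> g = \<zero> \<longrightarrow> (\<exists>r\<in>carrier R. c = r \<otimes> g))"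
proof -
  have lin: "linear_code R n C" using cc by (simp add: cyclic_code_def)
  have Cw: "C \<subseteq> words R n" and C0: "word_zero R \<in> C"
    and Cadd: "\<And>u v. u \<in> C \<Longrightarrow> v \<in> C \<Longrightarrow> word_add R n u v \<in> C"
    and Csm: "\<And>r v. r \<in> carrier R \<Longrightarrow> v \<in> C \<Longrightarrow> word_smult R n r v \<in> C"
    using lin unfolding linear_code_def by auto
  have Ceq: "C = dual_code R n C" using sd by (simp add: self_dual_def)
  have orth: "\<And>u w. u \<in> C \<Longrightarrow> w \<in> C \<Longrightarrow> inner_prod R n u w = \<zero>"
    using Ceq unfolding dual_code_def by blast
  have memC: "\<And>u. u \<in> words R n \<Longrightarrow> (\<forall>w\<in>C. inner_prod R n u w = \<zero>) \<Longrightarrow> u \<in> C"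
    using Ceq unfolding dual_code_def by blast
  define J where "J = {a \<in> carrier R. constw R n a \<in> C}"
  have smJ: "\<And>x a. a \<in> J \<Longrightarrow> x \<in> carrier R \<Longrightarrow> x \<otimes> a \<in> J"
  proof -
    fix x a assume "a \<in> J" "x \<in> carrier R"
    then show "x \<otimes> a \<in> J" using Csm[of x "constw R n a"] by (simp add: J_def smult_const)
  qed
  have Jid: "ideal J R"
  proof (rule idealI[OF ring_axioms])
    show "subgroup J (add_monoid R)"
    proof (rule add.subgroupI)
      show "J \<subseteq> carrier R" by (auto simp: J_def)
      show "J \<noteq> {}" using C0 by (auto simp: J_def zero_const intro!: exI[of _ \<zero>])
      fix a assume a: "a \<in> J"
      have "(\<ominus> \<one>) \<otimes> a \<in> J" using smJ[OF a] by simp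
      thus "\<ominus> a \<in> J" using a by (simp add: J_def l_minus)
      fix b assume b: "b \<in> J"
      show "a \<oplus> b \<in> J" using a b Cadd[of "constw R n a" "constw R n b"] by (simp add: J_def add_const)
    qed
    show "\<And>a x. a \<in> J \<Longrightarrow> x \<in> carrier R \<Longrightarrow> x \<otimes> a \<in> J" by (rule smJ)
    show "\<And>a x. a \<in> J \<Longrightarrow> x \<in> carrier R \<Longrightarrow> a \<otimes> x \<in> J"
      using smJ by (metis J_def m_comm mem_Collect_eq)
  qed
  obtain g where g: "g \<in> carrier R" "J = Idl {g}"
    using princ Jid principalideal.generate by blast
  have JP: "J = PIdl g" using g cgenideal_eq_genideal by simp
  have gJ: "g \<in> J" using JP cgenideal_self g(1) by blast
  have gg: "g \<otimes> g = \<zero>"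
  proof -
    have "constw R n g \<in> C" using gJ by (simp add: J_def)
    hence "[n] \<cdot> (g \<otimes> g) = \<zero>" using orth inner_const2[OF g(1) g(1), of n] by metis
    thus ?thesis using n_cancel[OF fin cop] g(1) by simp
  qed
  have ann: "\<forall>c\<in>carrier R. c \<otimes> g = \<zero> \<longrightarrow> (\<exists>r\<in>carrier R. c = r \<otimes> g)"
  proof (intro ballI impI)
    fix c assume c: "c \<in> carrier R" "c \<otimes> g = \<zero>"
    have "constw R n c \<in> C"
    proof (rule memC)
      show "constw R n c \<in> words R n" using constw_words c by blast
      show "\<forall>w\<in>C. inner_prod R n (constw R n c) w = \<zero>"
      proof
        fix w assume w: "w \<in> C"
        have ww: "w \<in> words R n" using w Cw by blast
        have sc: "(\<Oplus>j\<in>{..<n}. w j) \<in> carrier R"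
          using words_carrier[OF ww] by (intro finsum_closed) auto
        have "(\<Oplus>j\<in>{..<n}. w j) \<in> J" using sum_const_in[OF n cc w] sc by (simp add: J_def)
        then obtain r where r: "r \<in> carrier R" "(\<Oplus>j\<in>{..<n}. w j) = r \<otimes> g"
          using JP PIdl_mem by blast
        have "inner_prod R n (constw R n c) w = c \<otimes> (r \<otimes> g)"
          using inner_const[OF ww c(1)] r by simp
        also have "\<dots> = r \<otimes> (c \<otimes> g)" by (rule m_lcomm[OF c(1) r(1) g(1)])
        finally show "inner_prod R n (constw R n c) w = \<zero>" using c r by simp
      qed
    qed
    hence "c \<in> J" using c by (simp add: J_def)
    thus "\<exists>r\<in>carrier R. c = r \<otimes> g" using JP PIdl_mem by blast
  qed
  show ?thesis using g(1) gg ann by blast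
qed

lemma final:
  fixes n :: nat
  assumes fin: "finite (carrier R)"
    and princ: "\<forall>I. ideal I R \<longrightarrow> principalideal I R"
    and n: "0 < n"
    and cop: "\<forall>M. maximalideal M R \<longrightarrow> coprime n (card (carrier (R Quot M)))"
    and odd: "\<exists>m. maximalideal m R \<and> odd (stability_index R m)"
    and cc: "cyclic_code R n C" and sd: "self_dual R n C"
  shows False
proof -
  obtain g where g: "g \<in> carrier R" "g \<otimes> g = \<zero>"
    "\<forall>c\<in>carrier R. c \<otimes> g = \<zero> \<longrightarrow> (\<exists>r\<in>carrier R. c = r \<otimes> g)"
    using code_g[OF fin princ n cop cc sd] by blast
  obtain m where m: "maximalideal m R" "odd (stability_index R m)" using odd by blast
  have "principalideal m R" using princ maximalideal.axioms(1)[OF m(1)] by simp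
  then obtain p where p: "p \<in> carrier R" "m = Idl {p}" using principalideal.generate by blast
  have mP: "m = PIdl p" using p cgenideal_eq_genideal by simp
  interpret S: stab R p
  proof -
    have "maximalideal (PIdl p) R" using m(1) mP by simp
    thus "stab R p" using stab.intro[OF is_cring stab_axioms.intro[OF p(1) _ fin]] by simp
  qed
  have "even S.t" using S.even_t[OF g] .
  moreover have "S.t = stability_index R m" using mP S.t_def by simp
  ultimately show False using m(2) by simp
qed

end

theorem mainTheorem17:
  fixes R :: "('a, 'b) ring_scheme" and n :: nat
  assumes "cring R"
    and "finite (carrier R)"
    and "\<forall>I. ideal I R \<longrightarrow> principalideal I R"
    and "n > 0"
    and "\<forall>m. maximalideal m R \<longrightarrow> coprime n (card (carrier (R Quot m)))"
    and "\<exists>m. maximalideal m R \<and> odd (stability_index R m)"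
  shows "\<not> (\<exists>C. cyclic_code R n C \<and> self_dual R n C)"
  using cring.final[OF assms] by blast


end
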